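(* Let $a_1,\dots,a_k$ be non-negative integers with $\gcd(a_1,\dots,a_k)=1$, let $S=\langle a_1,\dots,a_k\rangle$ and $G(S)=\mathbb{Z}_{\geq0}\setminus S$. Let $I=\langle y_1-x^{a_1},\dots,y_k-x^{a_k}\rangle\subset\mathbb{Q}[x,y_1,\dots,y_k]$ and let $\mathcal{B}=\{g_1,\dots,g_r\}$ be the reduced Groebner basis of $I$ with respect to an elimination ordering for $x$. Let $q_i\in\mathbb{Z}_{\geq0}^{k+1}$ be the exponent of the leading monomial of $g_i$, let $K_{q_i}=q_i+\mathbb{Z}_{\geq0}^{k+1}$, and let $\overline{K_{q_i}}=\mathbb{Z}_{\geq0}^{k+1}\setminus K_{q_i}$. Let $\{x=0\}=\{(\sigma_0,\dots,\sigma_k)\in\mathbb{Z}^{k+1}_{\geq0}:\sigma_0=0\}$. Then: (1) the map $\mathcal{F}:G(S)\to\left[\bigcap_i\overline{K_{q_i}}\right]\setminus\{x=0\}$, $N\mapsto \exp(N_{\mathcal{B}}(x^N))$, is well defined and is a bijection; (2) the map $\mathcal{G}:S\to\left[\bigcap_i\overline{K_{q_i}}\right]\cap\{x=0\}$, $M\mapsto\exp(N_{\mathcal{B}}(x^M))$, is well defined and is a bijection.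
   Context: An elimination ordering for $x$ is a monomial order on $\mathbb{Q}[x,y_1,\dots,y_k]$ in which every monomial divisible by $x$ is greater than every monomial in $y_1,\dots,y_k$ only (e.g. lex with $x>y_1>\dots>y_k$). For a monomial $x^{\sigma_0}y_1^{\sigma_1}\cdots y_k^{\sigma_k}$, $\exp$ denotes its exponent vector $(\sigma_0,\sigma_1,\dots,\sigma_k)\in\mathbb{Z}^{k+1}_{\geq0}$. $N_{\mathcal{B}}(f)$ is the normal form of $f$ with respect to $\mathcal{B}$ (the unique remainder of $f$ on division by $\mathcal{B}$); for a monomial $x^N$ it is a monomial. *)

theory Defs
  imports Complex_Main "HOL-Library.Poly_Mapping"
begin

text \<open>Multivariate polynomials over the rationals: a monomial is an exponent vector
  (finitely supported map nat to nat) (variable 0 is x, variable i (1 \<le> i \<le> k) is y_i), and a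
  polynomial is a finitely supported map from monomials to coefficients.\<close>

type_synonym mon = "nat \<Rightarrow>\<^sub>0 nat"
type_synonym mpoly = "mon \<Rightarrow>\<^sub>0 rat"

definition Mon :: "nat \<Rightarrow> mon set" where
  "Mon n = {\<alpha>. Poly_Mapping.keys \<alpha> \<subseteq> {..<n}}"

definition Poly :: "nat \<Rightarrow> mpoly set" where
  "Poly n = {p. Poly_Mapping.keys p \<subseteq> Mon n}"

definition var :: "nat \<Rightarrow> mpoly" where
  "var i = Poly_Mapping.single (Poly_Mapping.single i 1) 1"

definition xpow :: "nat \<Rightarrow> nat \<Rightarrow> mpoly" where
  "xpow i e = Poly_Mapping.single (Poly_Mapping.single i e) 1"

definition mdvd :: "mon \<Rightarrow> mon \<Rightarrow> bool" where
  "mdvd \<alpha> \<beta> \<longleftrightarrow> (\<forall>i. Poly_Mapping.lookup \<alpha> i \<le> Poly_Mapping.lookup \<beta> i)"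

definition ideal_gen :: "nat \<Rightarrow> mpoly set \<Rightarrow> mpoly set" where
  "ideal_gen n F = {\<Sum>f\<in>F'. c f * f | F' c. finite F' \<and> F' \<subseteq> F \<and> (\<forall>f\<in>F'. c f \<in> Poly n)}"

definition monomial_order :: "nat \<Rightarrow> (mon \<Rightarrow> mon \<Rightarrow> bool) \<Rightarrow> bool" where
  "monomial_order n le \<longleftrightarrow>
     (\<forall>\<alpha>\<in>Mon n. le \<alpha> \<alpha>) \<and>
     (\<forall>\<alpha>\<in>Mon n. \<forall>\<beta>\<in>Mon n. le \<alpha> \<beta> \<and> le \<beta> \<alpha> \<longrightarrow> \<alpha> = \<beta>) \<and>
     (\<forall>\<alpha>\<in>Mon n. \<forall>\<beta>\<in>Mon n. \<forall>\<gamma>\<in>Mon n. le \<alpha> \<beta> \<and> le \<beta> \<gamma> \<longrightarrow> le \<alpha> \<gamma>) \<and>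
     (\<forall>\<alpha>\<in>Mon n. \<forall>\<beta>\<in>Mon n. le \<alpha> \<beta> \<or> le \<beta> \<alpha>) \<and>
     (\<forall>\<alpha>\<in>Mon n. \<forall>\<beta>\<in>Mon n. \<forall>\<gamma>\<in>Mon n. le \<alpha> \<beta> \<longrightarrow> le (\<alpha> + \<gamma>) (\<beta> + \<gamma>)) \<and>
     wfP (\<lambda>\<alpha> \<beta>. \<alpha> \<in> Mon n \<and> \<beta> \<in> Mon n \<and> le \<alpha> \<beta> \<and> \<alpha> \<noteq> \<beta>)"

definition elimination_order :: "nat \<Rightarrow> (mon \<Rightarrow> mon \<Rightarrow> bool) \<Rightarrow> bool" where
  "elimination_order n le \<longleftrightarrow> monomial_order n le \<and>
     (\<forall>\<alpha>\<in>Mon n. \<forall>\<beta>\<in>Mon n. Poly_Mapping.lookup \<alpha> 0 > 0 \<and> Poly_Mapping.lookup \<beta> 0 = 0 \<longrightarrow> le \<beta> \<alpha> \<and> \<beta> \<noteq> \<alpha>)"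

definition lm :: "(mon \<Rightarrow> mon \<Rightarrow> bool) \<Rightarrow> mpoly \<Rightarrow> mon" where
  "lm le p = (THE \<alpha>. \<alpha> \<in> Poly_Mapping.keys p \<and> (\<forall>\<beta>\<in>Poly_Mapping.keys p. le \<beta> \<alpha>))"

definition lc :: "(mon \<Rightarrow> mon \<Rightarrow> bool) \<Rightarrow> mpoly \<Rightarrow> rat" where
  "lc le p = Poly_Mapping.lookup p (lm le p)"

definition groebner_basis :: "nat \<Rightarrow> (mon \<Rightarrow> mon \<Rightarrow> bool) \<Rightarrow> mpoly set \<Rightarrow> mpoly set \<Rightarrow> bool" where
  "groebner_basis n le G I \<longleftrightarrow> finite G \<and> G \<subseteq> I \<and> ideal_gen n G = I \<and>
     (\<forall>f\<in>I. f \<noteq> 0 \<longrightarrow> (\<exists>g\<in>G. g \<noteq> 0 \<and> mdvd (lm le g) (lm le f)))"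

definition reduced_groebner_basis :: "nat \<Rightarrow> (mon \<Rightarrow> mon \<Rightarrow> bool) \<Rightarrow> mpoly set \<Rightarrow> mpoly set \<Rightarrow> bool" where
  "reduced_groebner_basis n le G I \<longleftrightarrow> groebner_basis n le G I \<and>
     (\<forall>g\<in>G. g \<noteq> 0 \<and> lc le g = 1 \<and>
        (\<forall>g'\<in>G - {g}. \<forall>\<alpha>\<in>Poly_Mapping.keys g. \<not> mdvd (lm le g') \<alpha>))"

definition normal_form :: "nat \<Rightarrow> (mon \<Rightarrow> mon \<Rightarrow> bool) \<Rightarrow> mpoly set \<Rightarrow> mpoly set \<Rightarrow> mpoly \<Rightarrow> mpoly" where
  "normal_form n le B I f = (THE r. r \<in> Poly n \<and> f - r \<in> I \<and>
      (\<forall>\<alpha>\<in>Poly_Mapping.keys r. \<forall>g\<in>B. \<not> mdvd (lm le g) \<alpha>))"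

definition expo :: "mpoly \<Rightarrow> mon" where
  "expo p = (THE \<alpha>. Poly_Mapping.keys p = {\<alpha>})"

definition semigroup_gen :: "nat \<Rightarrow> (nat \<Rightarrow> nat) \<Rightarrow> nat set" where
  "semigroup_gen k a = {\<Sum>i=1..k. c i * a i | c. True}"

definition toric_gens :: "nat \<Rightarrow> (nat \<Rightarrow> nat) \<Rightarrow> mpoly set" where
  "toric_gens k a = {var i - xpow 0 (a i) | i. i \<in> {1..k}}"

end

theory Submission
  imports Defs
begin


lemma lookup_mult_single_gen:
  fixes p :: mpoly
  shows "Poly_Mapping.lookup (p * Poly_Mapping.single t 1) k = (\<Sum>l. Poly_Mapping.lookup p l when k = l + t)"
proof -
  have i: "(\<Sum>aa. (1::rat) when t = aa \<and> k = l + aa) = (1 when k = l + t)" for l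
  proof -
    have "(\<Sum>aa. (1::rat) when t = aa \<and> k = l + aa) = (\<Sum>aa. ((1 when k = l + aa) when aa = t))"
      by (intro Sum_any.cong) (auto simp: when_def)
    also have "\<dots> = (1 when k = l + t)" by simp
    finally show ?thesis .
  qed
  show ?thesis
    by (simp add: lookup_mult lookup_single when_mult mult_when when_when i)
qed

lemma lookup_mult_single:
  fixes p :: mpoly
  shows "Poly_Mapping.lookup (p * Poly_Mapping.single t 1) (b + t) = Poly_Mapping.lookup p b"
proof -
  have "(\<Sum>l. Poly_Mapping.lookup p l when b + t = l + t) = (\<Sum>l. Poly_Mapping.lookup p l when l = b)"
    by (intro Sum_any.cong) (auto simp: when_def)
  then show ?thesis by (simp add: lookup_mult_single_gen)
qed

lemma keys_mult_single:
  fixes p :: mpoly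
  shows "Poly_Mapping.keys (p * Poly_Mapping.single t 1) = (\<lambda>b. b + t) ` Poly_Mapping.keys p"
proof
  show "Poly_Mapping.keys (p * Poly_Mapping.single t 1) \<subseteq> (\<lambda>b. b + t) ` Poly_Mapping.keys p"
    using keys_mult[of p "Poly_Mapping.single t 1"] by auto
  show "(\<lambda>b. b + t) ` Poly_Mapping.keys p \<subseteq> Poly_Mapping.keys (p * Poly_Mapping.single t 1)"
    by (auto simp: in_keys_iff lookup_mult_single)
qed

lemma Mon_add: "\<alpha> \<in> Mon n \<Longrightarrow> \<beta> \<in> Mon n \<Longrightarrow> \<alpha> + \<beta> \<in> Mon n"
  unfolding Mon_def using keys_add[of \<alpha> \<beta>] by auto

lemma Mon_single: "i < n \<Longrightarrow> Poly_Mapping.single i e \<in> Mon n"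
  unfolding Mon_def by auto

lemma Mon_zero: "0 \<in> Mon n"
  unfolding Mon_def by auto

lemma Mon_diff: "\<alpha> \<in> Mon n \<Longrightarrow> (\<alpha> :: mon) - \<beta> \<in> Mon n"
proof -
  assume a: "\<alpha> \<in> Mon n"
  have "Poly_Mapping.keys (\<alpha> - \<beta>) \<subseteq> Poly_Mapping.keys \<alpha>"
    by (auto simp: in_keys_iff lookup_minus)
  then show ?thesis using a unfolding Mon_def by auto
qed

lemma Poly_single: "\<alpha> \<in> Mon n \<Longrightarrow> Poly_Mapping.single \<alpha> c \<in> Poly n"
  unfolding Poly_def by auto

lemma Poly_add: "p \<in> Poly n \<Longrightarrow> q \<in> Poly n \<Longrightarrow> p + q \<in> Poly n"
  unfolding Poly_def using keys_add[of p q] by auto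

lemma Poly_diff: "p \<in> Poly n \<Longrightarrow> q \<in> Poly n \<Longrightarrow> p - q \<in> Poly n"
  unfolding Poly_def using keys_diff[of p q] by auto

lemma Poly_mult: "p \<in> Poly n \<Longrightarrow> q \<in> Poly n \<Longrightarrow> p * q \<in> Poly n"
  unfolding Poly_def using keys_mult[of p q] Mon_add by fastforce

lemma Poly_zero: "0 \<in> Poly n"
  unfolding Poly_def by auto

lemma Poly_sum: "finite A \<Longrightarrow> (\<And>x. x \<in> A \<Longrightarrow> f x \<in> Poly n) \<Longrightarrow> sum f A \<in> Poly n"
  by (induction A rule: finite_induct) (auto intro: Poly_zero Poly_add)

lemma Poly_neg1: "(-1 :: mpoly) \<in> Poly n"
proof -
  have "(-1 :: mpoly) = Poly_Mapping.single 0 (-1)" by (simp add: single_uminus)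
  then show ?thesis using Poly_single[OF Mon_zero] by metis
qed

lemma ideal_zero: "0 \<in> ideal_gen n F"
  unfolding ideal_gen_def by (rule CollectI, rule exI[of _ "{}"]) auto

lemma ideal_gen_mem: "f \<in> F \<Longrightarrow> f \<in> ideal_gen n F"
proof -
  assume "f \<in> F"
  have "Poly_Mapping.single 0 1 \<in> Poly n" by (rule Poly_single[OF Mon_zero])
  then have "(1::mpoly) \<in> Poly n" by simp
  then show ?thesis unfolding ideal_gen_def using \<open>f \<in> F\<close>
    by (intro CollectI exI[of _ "{f}"] exI[of _ "\<lambda>_. 1"]) auto
qed

lemma ideal_add: "p \<in> ideal_gen n F \<Longrightarrow> q \<in> ideal_gen n F \<Longrightarrow> p + q \<in> ideal_gen n F"
proof -
  assume "p \<in> ideal_gen n F" "q \<in> ideal_gen n F"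
  then obtain F1 c1 F2 c2 where p: "p = (\<Sum>f\<in>F1. c1 f * f)" "finite F1" "F1 \<subseteq> F" "\<forall>f\<in>F1. c1 f \<in> Poly n"
    and q: "q = (\<Sum>f\<in>F2. c2 f * f)" "finite F2" "F2 \<subseteq> F" "\<forall>f\<in>F2. c2 f \<in> Poly n"
    unfolding ideal_gen_def by blast
  define c where "c f = (if f \<in> F1 then c1 f else 0) + (if f \<in> F2 then c2 f else 0)" for f
  have "(\<Sum>f\<in>F1 \<union> F2. c f * f) = (\<Sum>f\<in>F1 \<union> F2. (if f \<in> F1 then c1 f * f else 0)) + (\<Sum>f\<in>F1 \<union> F2. (if f \<in> F2 then c2 f * f else 0))"
  proof -
    have "c f * f = (if f \<in> F1 then c1 f * f else 0) + (if f \<in> F2 then c2 f * f else 0)" for f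
      by (simp add: c_def distrib_right)
    then show ?thesis by (simp add: sum.distrib)
  qed
  also have "\<dots> = p + q"
  proof -
    have "(\<Sum>f\<in>F1 \<union> F2. (if f \<in> F1 then c1 f * f else 0)) = (\<Sum>f\<in>(F1 \<union> F2) \<inter> F1. c1 f * f)"
      using p q by (simp add: sum.inter_restrict[symmetric])
    moreover have "(\<Sum>f\<in>F1 \<union> F2. (if f \<in> F2 then c2 f * f else 0)) = (\<Sum>f\<in>(F1 \<union> F2) \<inter> F2. c2 f * f)"
      using p q by (simp add: sum.inter_restrict[symmetric])
    moreover have "(F1 \<union> F2) \<inter> F1 = F1" "(F1 \<union> F2) \<inter> F2 = F2" by auto
    ultimately show ?thesis using p q by simp
  qed
  finally have e: "p + q = (\<Sum>f\<in>F1 \<union> F2. c f * f)" by simp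
  have "\<forall>f\<in>F1 \<union> F2. c f \<in> Poly n"
    using p q unfolding c_def by (auto intro!: Poly_add Poly_zero)
  then show ?thesis unfolding ideal_gen_def using e p q
    by (intro CollectI exI[of _ "F1 \<union> F2"] exI[of _ c]) auto
qed

lemma ideal_mult: "r \<in> Poly n \<Longrightarrow> p \<in> ideal_gen n F \<Longrightarrow> r * p \<in> ideal_gen n F"
proof -
  assume r: "r \<in> Poly n" and "p \<in> ideal_gen n F"
  then obtain F1 c1 where p: "p = (\<Sum>f\<in>F1. c1 f * f)" "finite F1" "F1 \<subseteq> F" "\<forall>f\<in>F1. c1 f \<in> Poly n"
    unfolding ideal_gen_def by blast
  have e: "r * p = (\<Sum>f\<in>F1. (r * c1 f) * f)" using p by (simp add: sum_distrib_left mult.assoc)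
  show ?thesis unfolding ideal_gen_def using e p r
    by (intro CollectI exI[of _ F1] exI[of _ "\<lambda>f. r * c1 f"]) (auto intro: Poly_mult)
qed

lemma ideal_uminus: "p \<in> ideal_gen n F \<Longrightarrow> - p \<in> ideal_gen n F"
  using ideal_mult[OF Poly_neg1, of p n F] by simp

lemma ideal_diff: "p \<in> ideal_gen n F \<Longrightarrow> q \<in> ideal_gen n F \<Longrightarrow> p - q \<in> ideal_gen n F"
  using ideal_add[of p n F "-q"] ideal_uminus[of q n F] by simp

lemma ideal_Poly: "F \<subseteq> Poly n \<Longrightarrow> ideal_gen n F \<subseteq> Poly n"
  unfolding ideal_gen_def by (auto intro!: Poly_sum Poly_mult)

lemma mo_refl: "monomial_order n le \<Longrightarrow> \<alpha> \<in> Mon n \<Longrightarrow> le \<alpha> \<alpha>"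
  unfolding monomial_order_def by blast
lemma mo_antisym: "monomial_order n le \<Longrightarrow> \<alpha> \<in> Mon n \<Longrightarrow> \<beta> \<in> Mon n \<Longrightarrow> le \<alpha> \<beta> \<Longrightarrow> le \<beta> \<alpha> \<Longrightarrow> \<alpha> = \<beta>"
  unfolding monomial_order_def by blast
lemma mo_trans: "monomial_order n le \<Longrightarrow> \<alpha> \<in> Mon n \<Longrightarrow> \<beta> \<in> Mon n \<Longrightarrow> \<gamma> \<in> Mon n \<Longrightarrow> le \<alpha> \<beta> \<Longrightarrow> le \<beta> \<gamma> \<Longrightarrow> le \<alpha> \<gamma>"
  unfolding monomial_order_def by blast
lemma mo_total: "monomial_order n le \<Longrightarrow> \<alpha> \<in> Mon n \<Longrightarrow> \<beta> \<in> Mon n \<Longrightarrow> le \<alpha> \<beta> \<or> le \<beta> \<alpha>"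
  unfolding monomial_order_def by blast
lemma mo_add: "monomial_order n le \<Longrightarrow> \<alpha> \<in> Mon n \<Longrightarrow> \<beta> \<in> Mon n \<Longrightarrow> \<gamma> \<in> Mon n \<Longrightarrow> le \<alpha> \<beta> \<Longrightarrow> le (\<alpha> + \<gamma>) (\<beta> + \<gamma>)"
  unfolding monomial_order_def by blast
lemma mo_wf: "monomial_order n le \<Longrightarrow> wfP (\<lambda>\<alpha> \<beta>. \<alpha> \<in> Mon n \<and> \<beta> \<in> Mon n \<and> le \<alpha> \<beta> \<and> \<alpha> \<noteq> \<beta>)"
  unfolding monomial_order_def by blast

lemma max_exists:
  assumes mo: "monomial_order n le" and "finite A" "A \<noteq> {}" "A \<subseteq> Mon n"
  shows "\<exists>\<alpha>\<in>A. \<forall>\<beta>\<in>A. le \<beta> \<alpha>"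
  using assms(2-4)
proof (induction A rule: finite_ne_induct)
  case (singleton x)
  then show ?case using mo_refl[OF mo] by auto
next
  case (insert x F)
  then obtain \<alpha> where \<alpha>: "\<alpha> \<in> F" "\<forall>\<beta>\<in>F. le \<beta> \<alpha>" by auto
  have xM: "x \<in> Mon n" and FM: "F \<subseteq> Mon n" using insert by auto
  have aM: "\<alpha> \<in> Mon n" using \<alpha> FM by auto
  show ?case
  proof (cases "le x \<alpha>")
    case True
    then show ?thesis using \<alpha> by auto
  next
    case False
    then have xa: "le \<alpha> x" using mo_total[OF mo xM aM] by auto
    have "\<forall>\<beta>\<in>insert x F. le \<beta> x"
    proof
      fix \<beta> assume "\<beta> \<in> insert x F"
      then show "le \<beta> x"
      proof
        assume "\<beta> = x" then show ?thesis using mo_refl[OF mo xM] by simp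
      next
        assume b: "\<beta> \<in> F"
        then have "\<beta> \<in> Mon n" using FM by auto
        then show ?thesis using mo_trans[OF mo _ aM xM] \<alpha> b xa by blast
      qed
    qed
    then show ?thesis by auto
  qed
qed

lemma lm_eq:
  assumes mo: "monomial_order n le" and km: "Poly_Mapping.keys p \<subseteq> Mon n"
    and a: "\<alpha> \<in> Poly_Mapping.keys p" "\<forall>\<beta>\<in>Poly_Mapping.keys p. le \<beta> \<alpha>"
  shows "lm le p = \<alpha>"
  unfolding lm_def
proof (rule the_equality)
  show "\<alpha> \<in> Poly_Mapping.keys p \<and> (\<forall>\<beta>\<in>Poly_Mapping.keys p. le \<beta> \<alpha>)" using a by auto
  fix \<gamma> assume g: "\<gamma> \<in> Poly_Mapping.keys p \<and> (\<forall>\<beta>\<in>Poly_Mapping.keys p. le \<beta> \<gamma>)"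
  then have "le \<gamma> \<alpha>" "le \<alpha> \<gamma>" using a by auto
  then show "\<gamma> = \<alpha>" using mo_antisym[OF mo] km a g by blast
qed

lemma lm_props:
  assumes mo: "monomial_order n le" and "p \<in> Poly n" "p \<noteq> 0"
  shows "lm le p \<in> Poly_Mapping.keys p \<and> (\<forall>\<beta>\<in>Poly_Mapping.keys p. le \<beta> (lm le p))"
proof -
  have km: "Poly_Mapping.keys p \<subseteq> Mon n" using assms unfolding Poly_def by auto
  obtain \<alpha> where "\<alpha> \<in> Poly_Mapping.keys p" "\<forall>\<beta>\<in>Poly_Mapping.keys p. le \<beta> \<alpha>"
    using max_exists[OF mo finite_keys _ km] assms by auto
  with lm_eq[OF mo km this] show ?thesis by simp
qed


definition wt :: "(nat \<Rightarrow> nat) \<Rightarrow> nat \<Rightarrow> mon \<Rightarrow> nat" where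
  "wt a k \<beta> = Poly_Mapping.lookup \<beta> 0 + (\<Sum>i=1..k. Poly_Mapping.lookup \<beta> i * a i)"

lemma wt_add: "wt a k (\<beta> + \<gamma>) = wt a k \<beta> + wt a k \<gamma>"
  unfolding wt_def by (simp add: lookup_add distrib_right sum.distrib)

lemma wt_var: "i \<in> {1..k} \<Longrightarrow> wt a k (Poly_Mapping.single i 1) = a i"
proof -
  assume i: "i \<in> {1..k}"
  have "(\<Sum>j=1..k. Poly_Mapping.lookup (Poly_Mapping.single i 1) j * a j) = (\<Sum>j=1..k. if i = j then a j else 0)"
    by (intro sum.cong refl) (simp add: lookup_single when_def)
  also have "\<dots> = a i" using i by (simp add: sum.delta)
  finally show ?thesis using i unfolding wt_def by (simp add: lookup_single when_def)
qed

lemma wt_x: "wt a k (Poly_Mapping.single 0 e) = e"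
  unfolding wt_def by (auto simp: lookup_single when_def)

definition W :: "(mon \<Rightarrow> nat) \<Rightarrow> nat \<Rightarrow> mpoly \<Rightarrow> rat" where
  "W w d p = (\<Sum>\<beta>\<in>Poly_Mapping.keys p. if w \<beta> = d then Poly_Mapping.lookup p \<beta> else 0)"

lemma W_super:
  assumes "finite A" "Poly_Mapping.keys p \<subseteq> A"
  shows "W w d p = (\<Sum>\<beta>\<in>A. if w \<beta> = d then Poly_Mapping.lookup p \<beta> else 0)"
  unfolding W_def using assms by (intro sum.mono_neutral_left) (auto simp: in_keys_iff)

lemma W_add: "W w d (p + q) = W w d p + W w d q"
proof -
  let ?A = "Poly_Mapping.keys p \<union> Poly_Mapping.keys q"
  have "W w d (p + q) = (\<Sum>\<beta>\<in>?A. if w \<beta> = d then Poly_Mapping.lookup (p + q) \<beta> else 0)"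
    using keys_add[of p q] by (intro W_super) auto
  also have "\<dots> = (\<Sum>\<beta>\<in>?A. if w \<beta> = d then Poly_Mapping.lookup p \<beta> else 0) + (\<Sum>\<beta>\<in>?A. if w \<beta> = d then Poly_Mapping.lookup q \<beta> else 0)"
    by (simp add: lookup_add sum.distrib[symmetric] if_distrib cong: if_cong)
  also have "\<dots> = W w d p + W w d q"
    by (simp add: W_super[symmetric])
  finally show ?thesis .
qed

lemma W_uminus: "W w d (- p) = - W w d p"
  unfolding W_def by (simp add: sum_negf[symmetric] if_distrib cong: if_cong)

lemma W_diff: "W w d (p - q) = W w d p - W w d q"
  using W_add[of w d p "-q"] W_uminus[of w d q] by simp

lemma W_zero: "W w d 0 = 0"
  unfolding W_def by simp

lemma W_sum: "finite A \<Longrightarrow> W w d (sum f A) = (\<Sum>x\<in>A. W w d (f x))"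
  by (induction A rule: finite_induct) (auto simp: W_zero W_add)

lemma W_shift:
  assumes wadd: "\<And>\<beta> \<gamma>. w (\<beta> + \<gamma>) = w \<beta> + w \<gamma>"
  shows "W w d (p * Poly_Mapping.single t 1) =
    (\<Sum>\<beta>\<in>Poly_Mapping.keys p. if w \<beta> + w t = d then Poly_Mapping.lookup p \<beta> else 0)"
proof -
  have inj: "inj_on (\<lambda>b. b + t) (Poly_Mapping.keys p)" by (rule inj_onI) simp
  show ?thesis
    unfolding W_def keys_mult_single sum.reindex[OF inj]
    by (intro sum.cong refl) (simp only: lookup_mult_single wadd o_apply)
qed

lemma W_shift':
  assumes wadd: "\<And>\<beta> \<gamma>. w (\<beta> + \<gamma>) = w \<beta> + w \<gamma>"
    and "w t = w t'"
  shows "W w d (p * Poly_Mapping.single t 1) = W w d (p * Poly_Mapping.single t' 1)"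
  using assms(2) by (simp add: W_shift[OF wadd])



locale tor =
  fixes k :: nat and a :: "nat \<Rightarrow> nat" and le :: "mon \<Rightarrow> mon \<Rightarrow> bool" and B :: "mpoly set"
  assumes elim: "elimination_order (k + 1) le"
    and rgb: "reduced_groebner_basis (k + 1) le B (ideal_gen (k + 1) (toric_gens k a))"
begin

abbreviation "I \<equiv> ideal_gen (k + 1) (toric_gens k a)"
abbreviation "w \<equiv> wt a k"

definition CC where "CC = {\<sigma> \<in> Mon (k + 1). \<forall>g\<in>B. \<not> mdvd (lm le g) \<sigma>}"

lemma mo: "monomial_order (k + 1) le"
  using elim unfolding elimination_order_def by blast

lemma gens_Poly: "toric_gens k a \<subseteq> Poly (k + 1)"
  unfolding toric_gens_def var_def xpow_def
  by (auto intro!: Poly_diff Poly_single Mon_single)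

lemma I_Poly: "I \<subseteq> Poly (k + 1)"
  by (rule ideal_Poly[OF gens_Poly])

lemma B_I: "B \<subseteq> I"
  using rgb unfolding reduced_groebner_basis_def groebner_basis_def by (elim conjE)

lemma B_nz: "g \<in> B \<Longrightarrow> g \<noteq> 0"
  using rgb unfolding reduced_groebner_basis_def by auto

lemma gb: "f \<in> I \<Longrightarrow> f \<noteq> 0 \<Longrightarrow> \<exists>g\<in>B. g \<noteq> 0 \<and> mdvd (lm le g) (lm le f)"
  using rgb unfolding reduced_groebner_basis_def groebner_basis_def by (elim conjE) auto

lemma W_gen: "f \<in> toric_gens k a \<Longrightarrow> W w d (c * f) = 0"
proof -
  assume "f \<in> toric_gens k a"
  then obtain i where i: "i \<in> {1..k}" "f = var i - xpow 0 (a i)" unfolding toric_gens_def by blast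
  have "c * f = c * Poly_Mapping.single (Poly_Mapping.single i 1) 1 - c * Poly_Mapping.single (Poly_Mapping.single 0 (a i)) 1"
    using i unfolding var_def xpow_def by (simp add: right_diff_distrib)
  moreover have "w (Poly_Mapping.single i 1) = w (Poly_Mapping.single 0 (a i))"
    using i by (simp only: wt_var[OF i(1)] wt_x)
  then have "W w d (c * Poly_Mapping.single (Poly_Mapping.single i 1) 1) = W w d (c * Poly_Mapping.single (Poly_Mapping.single 0 (a i)) 1)"
    by (rule W_shift'[OF wt_add])
  ultimately show ?thesis by (simp only: W_diff)
qed

lemma W_I: "p \<in> I \<Longrightarrow> W w d p = 0"
proof -
  assume "p \<in> I"
  then obtain F c where "p = (\<Sum>f\<in>F. c f * f)" "finite F" "F \<subseteq> toric_gens k a"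
    unfolding ideal_gen_def by blast
  moreover have "\<forall>x\<in>F. W w d (c x * x) = 0" using W_gen calculation(3) by blast
  ultimately show ?thesis by (simp add: W_sum)
qed

lemma Mon_high: "\<sigma> \<in> Mon (k + 1) \<Longrightarrow> k < j \<Longrightarrow> Poly_Mapping.lookup \<sigma> j = 0"
  unfolding Mon_def by (auto simp: in_keys_iff)

lemma binom: "\<sigma> \<in> Mon (k + 1) \<Longrightarrow> Poly_Mapping.single \<sigma> 1 - xpow 0 (w \<sigma>) \<in> I"
proof (induction "\<Sum>i=1..k. Poly_Mapping.lookup \<sigma> i" arbitrary: \<sigma> rule: less_induct)
  case less
  show ?case
  proof (cases "\<exists>i\<in>{1..k}. Poly_Mapping.lookup \<sigma> i > 0")
    case False
    have se: "\<sigma> = Poly_Mapping.single 0 (Poly_Mapping.lookup \<sigma> 0)"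
    proof (rule poly_mapping_eqI)
      fix j
      show "Poly_Mapping.lookup \<sigma> j = Poly_Mapping.lookup (Poly_Mapping.single 0 (Poly_Mapping.lookup \<sigma> 0)) j"
      proof (cases "j = 0")
        case True then show ?thesis by simp
      next
        case False
        then have "Poly_Mapping.lookup \<sigma> j = 0"
          using \<open>\<not> (\<exists>i\<in>{1..k}. Poly_Mapping.lookup \<sigma> i > 0)\<close> Mon_high[OF less.prems, of j]
          by (cases "j \<le> k") auto
        then show ?thesis using False by (simp add: lookup_single)
      qed
    qed
    have "w \<sigma> = Poly_Mapping.lookup \<sigma> 0"
      using False unfolding wt_def by simp
    then have "Poly_Mapping.single \<sigma> 1 - xpow 0 (w \<sigma>) = 0"
      using se unfolding xpow_def by simp
    then show ?thesis by (simp add: ideal_zero)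
  next
    case True
    then obtain i where i: "i \<in> {1..k}" "Poly_Mapping.lookup \<sigma> i > 0" by blast
    define \<sigma>' where "\<sigma>' = \<sigma> - Poly_Mapping.single i 1"
    have lk: "Poly_Mapping.lookup \<sigma>' j = Poly_Mapping.lookup \<sigma> j - (if i = j then 1 else 0)" for j
      unfolding \<sigma>'_def by (simp add: lookup_minus lookup_single when_def)
    have seq: "\<sigma> = \<sigma>' + Poly_Mapping.single i 1"
      by (rule poly_mapping_eqI) (use i in \<open>auto simp: lookup_add lk lookup_single when_def\<close>)
    have M': "\<sigma>' \<in> Mon (k + 1)" unfolding \<sigma>'_def by (rule Mon_diff[OF less.prems])
    have "(\<Sum>j=1..k. Poly_Mapping.lookup \<sigma>' j) < (\<Sum>j=1..k. Poly_Mapping.lookup \<sigma> j)"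
      by (rule sum_strict_mono_ex1) (use i in \<open>auto simp: lk\<close>)
    then have IH: "Poly_Mapping.single \<sigma>' 1 - xpow 0 (w \<sigma>') \<in> I"
      using less.hyps M' by blast
    have ws: "w \<sigma> = w \<sigma>' + a i"
      using seq wt_add wt_var[OF i(1)] by metis
    have eq: "Poly_Mapping.single \<sigma> 1 - xpow 0 (w \<sigma>) =
      Poly_Mapping.single \<sigma>' 1 * (var i - xpow 0 (a i)) + xpow 0 (a i) * (Poly_Mapping.single \<sigma>' 1 - xpow 0 (w \<sigma>'))"
    proof -
      have e1: "Poly_Mapping.single \<sigma>' 1 * var i = Poly_Mapping.single \<sigma> (1::rat)"
        unfolding var_def using seq by (simp add: mult_single)
      have e2: "xpow 0 (a i) * xpow 0 (w \<sigma>') = xpow 0 (w \<sigma>)"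
        unfolding xpow_def ws by (simp add: mult_single single_add add.commute)
      have e3: "Poly_Mapping.single \<sigma>' 1 * xpow 0 (a i) = xpow 0 (a i) * Poly_Mapping.single \<sigma>' 1"
        by (simp add: mult.commute)
      show ?thesis
        by (simp add: right_diff_distrib e1 e2 e3)
    qed
    have g: "var i - xpow 0 (a i) \<in> I"
      using i by (intro ideal_gen_mem) (auto simp: toric_gens_def)
    have P1: "Poly_Mapping.single \<sigma>' 1 \<in> Poly (k + 1)" by (rule Poly_single[OF M'])
    have P2: "xpow 0 (a i) \<in> Poly (k + 1)" unfolding xpow_def by (intro Poly_single Mon_single) simp
    show ?thesis unfolding eq
      by (intro ideal_add ideal_mult P1 P2 g IH)
  qed
qed

definition nfP where
  "nfP f r \<longleftrightarrow> r \<in> Poly (k + 1) \<and> f - r \<in> I \<and> (\<forall>\<alpha>\<in>Poly_Mapping.keys r. \<forall>g\<in>B. \<not> mdvd (lm le g) \<alpha>)"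

lemma nf_unique:
  assumes "nfP f r1" "nfP f r2" shows "r1 = r2"
proof (rule ccontr)
  assume ne: "r1 \<noteq> r2"
  have "f - r2 \<in> I" "f - r1 \<in> I" using assms unfolding nfP_def by auto
  then have "(f - r2) - (f - r1) \<in> I" by (rule ideal_diff)
  moreover have "(f - r2) - (f - r1) = r1 - r2" by (simp add: algebra_simps)
  ultimately have dI: "r1 - r2 \<in> I" by simp
  have dnz: "r1 - r2 \<noteq> 0" using ne by simp
  obtain g where g: "g \<in> B" "mdvd (lm le g) (lm le (r1 - r2))" using gb[OF dI dnz] by blast
  have "lm le (r1 - r2) \<in> Poly_Mapping.keys (r1 - r2)"
    using lm_props[OF mo subsetD[OF I_Poly dI] dnz] by (rule conjunct1)
  then have "lm le (r1 - r2) \<in> Poly_Mapping.keys r1 \<union> Poly_Mapping.keys r2"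
    using keys_diff[of r1 r2] by (rule subsetD[rotated])
  moreover have "\<forall>\<alpha>\<in>Poly_Mapping.keys r1. \<forall>g\<in>B. \<not> mdvd (lm le g) \<alpha>"
    "\<forall>\<alpha>\<in>Poly_Mapping.keys r2. \<forall>g\<in>B. \<not> mdvd (lm le g) \<alpha>"
    using assms unfolding nfP_def by auto
  ultimately show False using g by blast
qed

lemma exists_std: "\<exists>\<sigma>\<in>CC. w \<sigma> = N"
proof -
  let ?R = "\<lambda>\<alpha> \<beta>. \<alpha> \<in> Mon (k + 1) \<and> \<beta> \<in> Mon (k + 1) \<and> le \<alpha> \<beta> \<and> \<alpha> \<noteq> \<beta>"
  let ?Q = "{\<sigma> \<in> Mon (k + 1). w \<sigma> = N}"
  have wf: "wfP ?R" by (rule mo_wf[OF mo])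
  have "Poly_Mapping.single 0 N \<in> ?Q" using Mon_single[of 0 "k + 1" N] wt_x[of a k N] by simp
  then obtain \<sigma> where s: "\<sigma> \<in> ?Q" and smin: "\<forall>y. ?R y \<sigma> \<longrightarrow> y \<notin> ?Q"
    using wf[unfolded wfp_eq_minimal, rule_format, of "Poly_Mapping.single 0 N" ?Q] by blast
  have "\<sigma> \<in> CC"
    unfolding CC_def
  proof (intro CollectI conjI ballI notI)
    show sM: "\<sigma> \<in> Mon (k + 1)" using s by simp
    fix g assume gB: "g \<in> B" and dv: "mdvd (lm le g) \<sigma>"
    have gI: "g \<in> I" using gB B_I by blast
    have gP: "g \<in> Poly (k + 1)" using gI I_Poly by blast
    have gnz: "g \<noteq> 0" using B_nz[OF gB] .
    define L where "L = lm le g"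
    have L: "L \<in> Poly_Mapping.keys g" "\<forall>\<beta>\<in>Poly_Mapping.keys g. le \<beta> L"
      using lm_props[OF mo gP gnz] unfolding L_def by auto
    have kg: "Poly_Mapping.keys g \<subseteq> Mon (k + 1)" using gP unfolding Poly_def by auto
    have LM: "L \<in> Mon (k + 1)" using L kg by blast
    define t where "t = \<sigma> - L"
    have tM: "t \<in> Mon (k + 1)" unfolding t_def by (rule Mon_diff[OF sM])
    have seq: "\<sigma> = L + t"
      by (rule poly_mapping_eqI) (use dv in \<open>auto simp: t_def lookup_add lookup_minus mdvd_def L_def\<close>)
    have fI: "g * Poly_Mapping.single t 1 \<in> I"
      using ideal_mult[OF Poly_single[OF tM] gI] by (simp add: mult.commute)
    have W0: "W w N (g * Poly_Mapping.single t 1) = 0" by (rule W_I[OF fI])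
    have wL: "w L + w t = N" using s seq wt_add[of a k L t] by simp
    have "\<exists>\<beta>\<in>Poly_Mapping.keys g. \<beta> \<noteq> L \<and> w \<beta> + w t = N"
    proof (rule ccontr)
      assume nb: "\<not> ?thesis"
      have "W w N (g * Poly_Mapping.single t 1) =
        (\<Sum>\<beta>\<in>Poly_Mapping.keys g. if w \<beta> + w t = N then Poly_Mapping.lookup g \<beta> else 0)"
        by (rule W_shift[OF wt_add])
      also have "\<dots> = (if w L + w t = N then Poly_Mapping.lookup g L else 0) +
          (\<Sum>\<beta>\<in>Poly_Mapping.keys g - {L}. if w \<beta> + w t = N then Poly_Mapping.lookup g \<beta> else 0)"
        using L(1) by (simp add: sum.remove)
      also have "(\<Sum>\<beta>\<in>Poly_Mapping.keys g - {L}. if w \<beta> + w t = N then Poly_Mapping.lookup g \<beta> else 0) = 0"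
        using nb by (intro sum.neutral) auto
      finally have "W w N (g * Poly_Mapping.single t 1) = Poly_Mapping.lookup g L" using wL by simp
      then show False using W0 L(1) by (simp add: in_keys_iff)
    qed
    then obtain \<beta> where b: "\<beta> \<in> Poly_Mapping.keys g" "\<beta> \<noteq> L" "w \<beta> + w t = N" by blast
    have bM: "\<beta> \<in> Mon (k + 1)" using b kg by blast
    have "le \<beta> L" using L(2) b(1) by blast
    then have "le (\<beta> + t) (L + t)" by (rule mo_add[OF mo bM LM tM])
    moreover have "\<beta> + t \<noteq> L + t" using b by simp
    moreover have "\<beta> + t \<in> Mon (k + 1)" using Mon_add[OF bM tM] .
    moreover have "w (\<beta> + t) = N" using b wt_add by metis
    ultimately have "?R (\<beta> + t) \<sigma> \<and> \<beta> + t \<in> ?Q" using seq sM by simp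
    then show False using smin by blast
  qed
  then show ?thesis using s by blast
qed

lemma nfP_single: "\<sigma> \<in> CC \<Longrightarrow> w \<sigma> = N \<Longrightarrow> nfP (xpow 0 N) (Poly_Mapping.single \<sigma> 1)"
proof -
  assume s: "\<sigma> \<in> CC" "w \<sigma> = N"
  have sM: "\<sigma> \<in> Mon (k + 1)" using s unfolding CC_def by auto
  have "- (Poly_Mapping.single \<sigma> 1 - xpow 0 (w \<sigma>)) \<in> I" by (intro ideal_uminus binom sM)
  then have "xpow 0 N - Poly_Mapping.single \<sigma> 1 \<in> I" using s by simp
  then show ?thesis using s Poly_single[OF sM] unfolding nfP_def CC_def by auto
qed

lemma NB_eq: "\<sigma> \<in> CC \<Longrightarrow> w \<sigma> = N \<Longrightarrow> normal_form (k + 1) le B I (xpow 0 N) = Poly_Mapping.single \<sigma> 1"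
  unfolding normal_form_def
  using nfP_single[of \<sigma> N] nf_unique[of "xpow 0 N" "Poly_Mapping.single \<sigma> 1"]
  unfolding nfP_def by (intro the_equality) blast+

lemma std_inj: "\<sigma>1 \<in> CC \<Longrightarrow> \<sigma>2 \<in> CC \<Longrightarrow> w \<sigma>1 = w \<sigma>2 \<Longrightarrow> \<sigma>1 = \<sigma>2"
proof -
  assume a: "\<sigma>1 \<in> CC" "\<sigma>2 \<in> CC" "w \<sigma>1 = w \<sigma>2"
  have "Poly_Mapping.single \<sigma>1 (1::rat) = Poly_Mapping.single \<sigma>2 1"
    using nf_unique[OF nfP_single[OF a(1) refl] nfP_single[OF a(2) a(3)[symmetric]]] .
  then have "Poly_Mapping.lookup (Poly_Mapping.single \<sigma>2 (1::rat)) \<sigma>1 = 1" by (metis lookup_single_eq)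
  then show ?thesis by (metis lookup_single_not_eq zero_neq_one)
qed

lemma elim_lemma:
  assumes s: "\<sigma> \<in> CC" "Poly_Mapping.lookup \<sigma> 0 > 0"
  shows "w \<sigma> \<notin> semigroup_gen k a"
proof
  assume "w \<sigma> \<in> semigroup_gen k a"
  then obtain c where c: "w \<sigma> = (\<Sum>i=1..k. c i * a i)" unfolding semigroup_gen_def by blast
  define \<tau> where "\<tau> = (\<Sum>i\<in>{1..k}. Poly_Mapping.single i (c i))"
  have lt: "Poly_Mapping.lookup \<tau> j = (if j \<in> {1..k} then c j else 0)" for j
  proof -
    have "Poly_Mapping.lookup \<tau> j = (\<Sum>i\<in>{1..k}. if i = j then c i else 0)"
      unfolding \<tau>_def by (simp add: lookup_sum lookup_single when_def)
    also have "\<dots> = (if j \<in> {1..k} then c j else 0)" by (simp add: sum.delta')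
    finally show ?thesis .
  qed
  have tM: "\<tau> \<in> Mon (k + 1)" unfolding Mon_def by (auto simp: in_keys_iff lt split: if_splits)
  have t0: "Poly_Mapping.lookup \<tau> 0 = 0" using lt by simp
  have "(\<Sum>i=1..k. Poly_Mapping.lookup \<tau> i * a i) = (\<Sum>i=1..k. c i * a i)"
    by (rule sum.cong) (auto simp: lt)
  then have "w \<tau> = (\<Sum>i=1..k. c i * a i)" unfolding wt_def using t0 by simp
  then have wt: "w \<tau> = w \<sigma>" using c by simp
  have sM: "\<sigma> \<in> Mon (k + 1)" using s unfolding CC_def by auto
  have el: "le \<tau> \<sigma> \<and> \<tau> \<noteq> \<sigma>"
    using elim tM sM s(2) t0 unfolding elimination_order_def by blast
  define p where "p = Poly_Mapping.single \<sigma> 1 - Poly_Mapping.single \<tau> (1::rat)"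
  have "(Poly_Mapping.single \<sigma> 1 - xpow 0 (w \<sigma>)) - (Poly_Mapping.single \<tau> 1 - xpow 0 (w \<tau>)) \<in> I"
    by (intro ideal_diff binom sM tM)
  then have pI: "p \<in> I" unfolding p_def wt by simp
  have lp: "Poly_Mapping.lookup p \<sigma> = 1"
    unfolding p_def using el by (simp add: lookup_minus lookup_single when_def)
  then have pnz: "p \<noteq> 0" by auto
  have kp: "Poly_Mapping.keys p \<subseteq> {\<sigma>, \<tau>}" unfolding p_def using keys_diff[of "Poly_Mapping.single \<sigma> (1::rat)" "Poly_Mapping.single \<tau> 1"] by auto
  have "lm le p = \<sigma>"
  proof (rule lm_eq[OF mo])
    show "Poly_Mapping.keys p \<subseteq> Mon (k + 1)" using kp sM tM by blast
    show "\<sigma> \<in> Poly_Mapping.keys p" using lp by (simp add: in_keys_iff)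
    show "\<forall>\<beta>\<in>Poly_Mapping.keys p. le \<beta> \<sigma>" using kp el mo_refl[OF mo sM] by blast
  qed
  then obtain g where "g \<in> B" "mdvd (lm le g) \<sigma>" using gb[OF pI pnz] by auto
  then show False using s unfolding CC_def by auto
qed

lemma in_S: "\<sigma> \<in> CC \<Longrightarrow> Poly_Mapping.lookup \<sigma> 0 = 0 \<Longrightarrow> w \<sigma> \<in> semigroup_gen k a"
  unfolding semigroup_gen_def wt_def by auto

end


theorem mainTheorem5:
  fixes k :: nat and a :: "nat \<Rightarrow> nat"
    and le :: "mon \<Rightarrow> mon \<Rightarrow> bool" and B :: "mpoly set"
  assumes gcd: "Gcd (a ` {1..k}) = 1"
    and elim: "elimination_order (k + 1) le"
    and rgb: "reduced_groebner_basis (k + 1) le B (ideal_gen (k + 1) (toric_gens k a))"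
  defines "S \<equiv> semigroup_gen k a"
    and "NB \<equiv> normal_form (k + 1) le B (ideal_gen (k + 1) (toric_gens k a))"
    and "C \<equiv> {\<sigma> \<in> Mon (k + 1). \<forall>g\<in>B. \<not> mdvd (lm le g) \<sigma>}"
  shows "(\<forall>N. \<exists>\<alpha>. Poly_Mapping.keys (NB (xpow 0 N)) = {\<alpha>})
     \<and> bij_betw (\<lambda>N. expo (NB (xpow 0 N))) (UNIV - S) (C - {\<sigma>. Poly_Mapping.lookup \<sigma> 0 = 0})
     \<and> bij_betw (\<lambda>M. expo (NB (xpow 0 M))) S (C \<inter> {\<sigma>. Poly_Mapping.lookup \<sigma> 0 = 0})"
proof -
  interpret tor k a le B using elim rgb by unfold_locales
  have CC: "C = CC" unfolding C_def CC_def ..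
  define sig where "sig N = (SOME \<sigma>. \<sigma> \<in> CC \<and> w \<sigma> = N)" for N
  have sig: "sig N \<in> CC \<and> w (sig N) = N" for N
  proof -
    have "\<exists>\<sigma>. \<sigma> \<in> CC \<and> w \<sigma> = N" using exists_std[of N] by blast
    then show ?thesis unfolding sig_def by (rule someI_ex)
  qed
  have NBe: "NB (xpow 0 N) = Poly_Mapping.single (sig N) 1" for N
    unfolding NB_def using NB_eq[OF conjunct1[OF sig] conjunct2[OF sig]] .
  have ex: "expo (Poly_Mapping.single \<sigma> (1::rat)) = \<sigma>" for \<sigma>
    unfolding expo_def by simp
  have F: "(\<lambda>N. expo (NB (xpow 0 N))) = sig"
    by (rule ext) (simp add: NBe ex)
  have inj: "inj_on sig A" for A
  proof (rule inj_onI)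
    fix x y assume "sig x = sig y"
    then have "w (sig x) = w (sig y)" by simp
    then show "x = y" using sig[of x] sig[of y] by simp
  qed
  have bk: "sig (w \<sigma>) = \<sigma>" if "\<sigma> \<in> CC" for \<sigma>
    using std_inj[OF conjunct1[OF sig[of "w \<sigma>"]] that] sig[of "w \<sigma>"] by simp
  have p1: "\<forall>N. \<exists>\<alpha>. Poly_Mapping.keys (NB (xpow 0 N)) = {\<alpha>}"
    by (simp add: NBe)
  have p2: "bij_betw sig (UNIV - S) (CC - {\<sigma>. Poly_Mapping.lookup \<sigma> 0 = 0})"
    unfolding bij_betw_def
  proof (intro conjI inj equalityI subsetI)
    fix x assume "x \<in> sig ` (UNIV - S)"
    then obtain N where N: "N \<notin> S" "x = sig N" by blast
    have "Poly_Mapping.lookup x 0 \<noteq> 0"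
      using in_S[of x] sig[of N] N unfolding S_def by auto
    then show "x \<in> CC - {\<sigma>. Poly_Mapping.lookup \<sigma> 0 = 0}" using sig N by auto
  next
    fix x assume x: "x \<in> CC - {\<sigma>. Poly_Mapping.lookup \<sigma> 0 = 0}"
    then have "w x \<notin> S" using elim_lemma[of x] unfolding S_def by auto
    then show "x \<in> sig ` (UNIV - S)" using bk[of x] x by (metis Diff_iff UNIV_I image_eqI)
  qed
  have p3: "bij_betw sig S (CC \<inter> {\<sigma>. Poly_Mapping.lookup \<sigma> 0 = 0})"
    unfolding bij_betw_def
  proof (intro conjI inj equalityI subsetI)
    fix x assume "x \<in> sig ` S"
    then obtain N where N: "N \<in> S" "x = sig N" by blast
    have "Poly_Mapping.lookup x 0 = 0"
      using elim_lemma[of x] sig[of N] N unfolding S_def by auto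
    then show "x \<in> CC \<inter> {\<sigma>. Poly_Mapping.lookup \<sigma> 0 = 0}" using sig N by auto
  next
    fix x assume x: "x \<in> CC \<inter> {\<sigma>. Poly_Mapping.lookup \<sigma> 0 = 0}"
    then have "w x \<in> S" using in_S[of x] unfolding S_def by auto
    then show "x \<in> sig ` S" using bk[of x] x by (metis IntD1 image_eqI)
  qed
  show ?thesis unfolding F CC using p1 p2 p3 by (intro conjI)
qed

end
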